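(* If $V$ is a finite dimensional operator space, then the matrix unit ball of $V$ is operator compact.
   Context: The matrix unit ball of an operator space $V$ is the matrix set $(B_k)_k$ with $B_k$ the closed unit ball of $M_k(V)$. $\mathcal{K}$ denotes the compact operators on $\ell^2$ and $\mathcal{K}(V)=\mathcal{K}\check{\otimes}V$ the operator-space minimal tensor product (completion of $M_\infty(V)$, finitely supported infinite matrices over $V$). $\mathcal{T}$ is the trace class on $\ell^2$ as operator space dual of $\mathcal{K}$, $M_k(\mathcal{T})\cong\mathcal{CB}(\mathcal{K},M_k)$ with norm $\|\cdot\|_{\mathcal{T}}$, $M_\infty\subseteq\mathcal{T}$, and $(\sigma\otimes\mathrm{id})(x)\in M_k(V)$ is the slice map. A matrix set $\boldsymbol{X}=(X_k)$, $X_k\subseteq M_k(V)$, is operator compact if each $X_k$ is closed and there is $x\in\mathcal{K}(V)$ with $X_k\subseteq\overline{\{(\sigma\otimes\mathrm{id})(x):\sigma\in M_k(M_\infty),\|\sigma\|_{\mathcal{T}}\le1\}}$ for all $k$. *)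

theory Defs
  imports "HOL-Analysis.Analysis"
begin

text \<open>Matrices over V (and over the scalars) are represented as functions
  nat => nat => _ ; a k x k matrix is one vanishing outside indices < k.
  Scalars are complex; V is an abstract complex vector space given by a
  scalar multiplication smul, and the operator space structure is given
  abstractly (Ruan) by a family of matrix norms nrm k on M_k(V).\<close>

definition mat_set :: "nat \<Rightarrow> (nat \<Rightarrow> nat \<Rightarrow> 'v::zero) set" where
  "mat_set k = {x. \<forall>i j. (k \<le> i \<or> k \<le> j) \<longrightarrow> x i j = 0}"

definition cmat_norm :: "nat \<Rightarrow> nat \<Rightarrow> (nat \<Rightarrow> nat \<Rightarrow> complex) \<Rightarrow> real" where
  "cmat_norm m n a = Sup {sqrt (\<Sum>i<m. (cmod (\<Sum>j<n. a i j * \<xi> j))^2) | \<xi>.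
                          (\<Sum>j<n. (cmod (\<xi> j))^2) \<le> 1}"

definition mmul :: "(complex \<Rightarrow> 'v \<Rightarrow> 'v) \<Rightarrow> nat \<Rightarrow> nat \<Rightarrow> (nat \<Rightarrow> nat \<Rightarrow> complex)
    \<Rightarrow> (nat \<Rightarrow> nat \<Rightarrow> 'v::ab_group_add) \<Rightarrow> (nat \<Rightarrow> nat \<Rightarrow> complex) \<Rightarrow> (nat \<Rightarrow> nat \<Rightarrow> 'v)" where
  "mmul smul m n \<alpha> x \<beta> = (\<lambda>i j. if i < m \<and> j < m
      then (\<Sum>p<n. \<Sum>q<n. smul (\<alpha> i p * \<beta> q j) (x p q)) else 0)"

definition dsum :: "nat \<Rightarrow> nat \<Rightarrow> (nat \<Rightarrow> nat \<Rightarrow> 'v::zero) \<Rightarrow> (nat \<Rightarrow> nat \<Rightarrow> 'v) \<Rightarrow> (nat \<Rightarrow> nat \<Rightarrow> 'v)" where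
  "dsum n m x y = (\<lambda>i j. if i < n \<and> j < n then x i j
      else if n \<le> i \<and> n \<le> j \<and> i < n + m \<and> j < n + m then y (i - n) (j - n) else 0)"

definition operator_space :: "(complex \<Rightarrow> 'v::ab_group_add \<Rightarrow> 'v) \<Rightarrow> (nat \<Rightarrow> (nat \<Rightarrow> nat \<Rightarrow> 'v) \<Rightarrow> real) \<Rightarrow> bool" where
  "operator_space smul nrm \<longleftrightarrow>
     vector_space smul \<and>
     (\<forall>k. \<forall>x\<in>mat_set k. 0 \<le> nrm k x \<and> (nrm k x = 0 \<longleftrightarrow> x = (\<lambda>i j. 0))) \<and>
     (\<forall>k. \<forall>x\<in>mat_set k. \<forall>y\<in>mat_set k. nrm k (\<lambda>i j. x i j + y i j) \<le> nrm k x + nrm k y) \<and>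
     (\<forall>k c. \<forall>x\<in>mat_set k. nrm k (\<lambda>i j. smul c (x i j)) = cmod c * nrm k x) \<and>
     (\<forall>m n \<alpha> \<beta>. \<forall>x\<in>mat_set n.
        nrm m (mmul smul m n \<alpha> x \<beta>) \<le> cmat_norm m n \<alpha> * nrm n x * cmat_norm n m \<beta>) \<and>
     (\<forall>n m. \<forall>x\<in>mat_set n. \<forall>y\<in>mat_set m. nrm (n + m) (dsum n m x y) = max (nrm n x) (nrm m y))"

definition findim :: "(complex \<Rightarrow> 'v::ab_group_add \<Rightarrow> 'v) \<Rightarrow> bool" where
  "findim smul \<longleftrightarrow> (\<exists>B. finite B \<and> module.span smul B = UNIV)"

definition trunc :: "nat \<Rightarrow> (nat \<Rightarrow> nat \<Rightarrow> 'v::zero) \<Rightarrow> (nat \<Rightarrow> nat \<Rightarrow> 'v)" where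
  "trunc n x = (\<lambda>i j. if i < n \<and> j < n then x i j else 0)"

text \<open>K(V), the completion of M_infinity(V), realised as the infinite matrices over V
  whose truncations form a Cauchy sequence (in the norm of M_infinity(V)).\<close>
definition KV :: "(nat \<Rightarrow> (nat \<Rightarrow> nat \<Rightarrow> 'v::ab_group_add) \<Rightarrow> real) \<Rightarrow> (nat \<Rightarrow> nat \<Rightarrow> 'v) set" where
  "KV nrm = {x. \<forall>\<epsilon>>0. \<exists>N. \<forall>m n. N \<le> m \<longrightarrow> N \<le> n \<longrightarrow>
       nrm (max m n) (\<lambda>i j. trunc m x i j - trunc n x i j) < \<epsilon>}"

text \<open>sigma in M_k(M_infinity): a k x k matrix of finitely supported scalar matrices.\<close>
definition fin_supp :: "nat \<Rightarrow> (nat \<Rightarrow> nat \<Rightarrow> nat \<Rightarrow> nat \<Rightarrow> complex) \<Rightarrow> bool" where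
  "fin_supp N \<sigma> \<longleftrightarrow> (\<forall>i j u v. (N \<le> u \<or> N \<le> v) \<longrightarrow> \<sigma> i j u v = 0)"

text \<open>The map K -> M_k given by sigma (pairing <t,a> = sum t_uv a_uv), amplified to M_p(K) -> M_p(M_k);
  a in M_p(M_n) is encoded as a pn x pn matrix A, block (r,s) entry (u,v) = A (r*n+u) (s*n+v),
  and the result in M_p(M_k) as a pk x pk matrix.\<close>
definition sigma_ampl :: "nat \<Rightarrow> (nat \<Rightarrow> nat \<Rightarrow> nat \<Rightarrow> nat \<Rightarrow> complex) \<Rightarrow> nat \<Rightarrow>
    (nat \<Rightarrow> nat \<Rightarrow> complex) \<Rightarrow> (nat \<Rightarrow> nat \<Rightarrow> complex)" where
  "sigma_ampl k \<sigma> n A = (\<lambda>I J. \<Sum>u<n. \<Sum>v<n.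
      \<sigma> (I mod k) (J mod k) u v * A ((I div k) * n + u) ((J div k) * n + v))"

text \<open>The trace class norm of sigma in M_k(T) = CB(K, M_k): the cb norm of the associated map.\<close>
definition tnorm :: "nat \<Rightarrow> (nat \<Rightarrow> nat \<Rightarrow> nat \<Rightarrow> nat \<Rightarrow> complex) \<Rightarrow> real" where
  "tnorm k \<sigma> = Sup {cmat_norm (p * k) (p * k) (sigma_ampl k \<sigma> n A) | p n A.
                      cmat_norm (p * n) (p * n) A \<le> 1}"

definition slice :: "(complex \<Rightarrow> 'v \<Rightarrow> 'v) \<Rightarrow> nat \<Rightarrow> nat \<Rightarrow> (nat \<Rightarrow> nat \<Rightarrow> nat \<Rightarrow> nat \<Rightarrow> complex)
    \<Rightarrow> (nat \<Rightarrow> nat \<Rightarrow> 'v::ab_group_add) \<Rightarrow> (nat \<Rightarrow> nat \<Rightarrow> 'v)" where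
  "slice smul k N \<sigma> x = (\<lambda>i j. if i < k \<and> j < k
      then (\<Sum>u<N. \<Sum>v<N. smul (\<sigma> i j u v) (x u v)) else 0)"

definition mclosure :: "(nat \<Rightarrow> (nat \<Rightarrow> nat \<Rightarrow> 'v::ab_group_add) \<Rightarrow> real) \<Rightarrow> nat
    \<Rightarrow> (nat \<Rightarrow> nat \<Rightarrow> 'v) set \<Rightarrow> (nat \<Rightarrow> nat \<Rightarrow> 'v) set" where
  "mclosure nrm k S = {y \<in> mat_set k. \<forall>\<epsilon>>0. \<exists>s\<in>S. nrm k (\<lambda>i j. y i j - s i j) < \<epsilon>}"

definition op_compact :: "(complex \<Rightarrow> 'v \<Rightarrow> 'v) \<Rightarrow> (nat \<Rightarrow> (nat \<Rightarrow> nat \<Rightarrow> 'v::ab_group_add) \<Rightarrow> real)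
    \<Rightarrow> (nat \<Rightarrow> (nat \<Rightarrow> nat \<Rightarrow> 'v) set) \<Rightarrow> bool" where
  "op_compact smul nrm X \<longleftrightarrow>
     (\<forall>k. X k \<subseteq> mat_set k \<and> mclosure nrm k (X k) = X k) \<and>
     (\<exists>x\<in>KV nrm. \<forall>k. X k \<subseteq> mclosure nrm k
        {slice smul k N \<sigma> x | N \<sigma>. fin_supp N \<sigma> \<and> tnorm k \<sigma> \<le> 1})"

definition matrix_unit_ball :: "(nat \<Rightarrow> (nat \<Rightarrow> nat \<Rightarrow> 'v::zero) \<Rightarrow> real) \<Rightarrow> nat \<Rightarrow> (nat \<Rightarrow> nat \<Rightarrow> 'v) set" where
  "matrix_unit_ball nrm k = {x \<in> mat_set k. nrm k x \<le> 1}"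

end

theory Submission
  imports Defs
begin


definition vn :: "nat \<Rightarrow> (nat \<Rightarrow> complex) \<Rightarrow> real" where
  "vn n \<xi> = L2_set (\<lambda>j. cmod (\<xi> j)) {..<n}"

definition mv :: "nat \<Rightarrow> (nat \<Rightarrow> nat \<Rightarrow> complex) \<Rightarrow> (nat \<Rightarrow> complex) \<Rightarrow> (nat \<Rightarrow> complex)" where
  "mv n a \<xi> = (\<lambda>i. \<Sum>j<n. a i j * \<xi> j)"

lemma cmat_norm_alt: "cmat_norm m n a = Sup {vn m (mv n a \<xi>) | \<xi>. vn n \<xi> \<le> 1}"
proof -
  have "(\<Sum>j<n. (cmod (\<xi> j))^2) \<le> 1 \<longleftrightarrow> vn n \<xi> \<le> 1" for \<xi>
    by (simp add: vn_def L2_set_def)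
  then show ?thesis unfolding cmat_norm_def by (simp add: vn_def L2_set_def mv_def)
qed

lemma vn_nonneg: "0 \<le> vn n \<xi>" by (simp add: vn_def L2_set_nonneg)

lemma vn_le_sum: "vn n \<xi> \<le> (\<Sum>j<n. cmod (\<xi> j))"
  unfolding vn_def by (rule order_trans[OF L2_set_le_sum]) auto

lemma vn_coord: "j < n \<Longrightarrow> cmod (\<xi> j) \<le> vn n \<xi>"
  unfolding vn_def by (rule member_le_L2_set) auto

lemma cmat_bdd: "bdd_above {vn m (mv n a \<xi>) | \<xi>. vn n \<xi> \<le> 1}"
proof (rule bdd_aboveI[where M="\<Sum>i<m. \<Sum>j<n. cmod (a i j)"], clarify)
  fix \<xi> :: "nat \<Rightarrow> complex" assume h: "vn n \<xi> \<le> 1"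
  have "vn m (mv n a \<xi>) \<le> (\<Sum>i<m. cmod (mv n a \<xi> i))" by (rule vn_le_sum)
  also have "\<dots> \<le> (\<Sum>i<m. \<Sum>j<n. cmod (a i j))"
  proof (rule sum_mono)
    fix i assume "i \<in> {..<m}"
    have "cmod (mv n a \<xi> i) \<le> (\<Sum>j<n. cmod (a i j * \<xi> j))"
      unfolding mv_def by (rule norm_sum)
    also have "\<dots> \<le> (\<Sum>j<n. cmod (a i j))"
    proof (rule sum_mono)
      fix j assume "j \<in> {..<n}"
      then have "cmod (\<xi> j) \<le> 1" using vn_coord[of j n \<xi>] h by auto
      then show "cmod (a i j * \<xi> j) \<le> cmod (a i j)"
        by (simp add: norm_mult mult_left_le)
    qed
    finally show "cmod (mv n a \<xi> i) \<le> (\<Sum>j<n. cmod (a i j))" .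
  qed
  finally show "vn m (mv n a \<xi>) \<le> (\<Sum>i<m. \<Sum>j<n. cmod (a i j))" .
qed

lemma cmat_upper: "vn n \<xi> \<le> 1 \<Longrightarrow> vn m (mv n a \<xi>) \<le> cmat_norm m n a"
  unfolding cmat_norm_alt by (rule cSup_upper[OF _ cmat_bdd]) auto

lemma vn_0[simp]: "vn n (\<lambda>_. 0) = 0" by (simp add: vn_def L2_set_def)

lemma cmat_nonneg: "0 \<le> cmat_norm m n a"
proof -
  have "vn n (\<lambda>_. 0) \<le> 1" by simp
  then have "vn m (mv n a (\<lambda>_. 0)) \<le> cmat_norm m n a" by (rule cmat_upper)
  then show ?thesis using vn_nonneg[of m "mv n a (\<lambda>_. 0)"] by linarith
qed

lemma cmat_least: assumes "(\<And>\<xi>. vn n \<xi> \<le> 1 \<Longrightarrow> vn m (mv n a \<xi>) \<le> c)" shows "cmat_norm m n a \<le> c"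
proof -
  have "vn n (\<lambda>_. 0) \<le> 1" by simp
  then have "{vn m (mv n a \<xi>) | \<xi>. vn n \<xi> \<le> 1} \<noteq> {}" by blast
  then show ?thesis unfolding cmat_norm_alt by (rule cSup_least) (use assms in auto)
qed

lemma vn_scale: "vn n (\<lambda>j. c * \<xi> j) = cmod c * vn n \<xi>"
  unfolding vn_def by (simp add: norm_mult L2_set_right_distrib)

lemma mv_scale: "mv n a (\<lambda>j. c * \<xi> j) = (\<lambda>i. c * mv n a \<xi> i)"
  unfolding mv_def by (auto simp: sum_distrib_left algebra_simps)

lemma vn_zero_iff: "vn n \<xi> = 0 \<longleftrightarrow> (\<forall>j<n. \<xi> j = 0)"
  unfolding vn_def L2_set_def by (auto simp: sum_nonneg_eq_0_iff)

lemma cmat_hom: "vn m (mv n a \<xi>) \<le> cmat_norm m n a * vn n \<xi>"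
proof (cases "vn n \<xi> = 0")
  case True
  then have "mv n a \<xi> = (\<lambda>_. 0)" by (auto simp: vn_zero_iff mv_def)
  then show ?thesis using True by simp
next
  case False
  define t where "t = vn n \<xi>"
  have tp: "t > 0" using False vn_nonneg t_def by (metis less_eq_real_def)
  have "vn n (\<lambda>j. complex_of_real (1/t) * \<xi> j) = 1"
    using tp by (subst vn_scale) (simp add: t_def[symmetric] norm_divide)
  then have "vn m (mv n a (\<lambda>j. complex_of_real (1/t) * \<xi> j)) \<le> cmat_norm m n a"
    by (intro cmat_upper) simp
  then have "(1/t) * vn m (mv n a \<xi>) \<le> cmat_norm m n a"
    using tp by (subst (asm) mv_scale, subst (asm) vn_scale) (simp add: norm_divide)
  then show ?thesis using tp by (simp add: t_def[symmetric] field_simps mult.commute)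
qed

definition ns :: "nat \<Rightarrow> (nat \<Rightarrow> complex) \<Rightarrow> real" where
  "ns n \<xi> = (\<Sum>j<n. (cmod (\<xi> j))^2)"

lemma vn_ns: "vn n \<xi> = sqrt (ns n \<xi>)" by (simp add: vn_def L2_set_def ns_def)

lemma ns_nonneg: "0 \<le> ns n \<xi>" by (simp add: ns_def sum_nonneg)

lemma sum_blocks: "(\<Sum>I<p*k. g I) = (\<Sum>r<p. \<Sum>i<k. g (r*k+i))" for p k :: nat
  and g :: "nat \<Rightarrow> 'a::comm_monoid_add"
proof (induction p)
  case 0 then show ?case by simp
next
  case (Suc p)
  have "{..<Suc p * k} = {..<p*k} \<union> {p*k..<p*k+k}" by auto
  then have "(\<Sum>I<Suc p*k. g I) = (\<Sum>I<p*k. g I) + (\<Sum>I\<in>{p*k..<p*k+k}. g I)"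
    by (simp add: sum.union_disjoint ivl_disj_int)
  also have "(\<Sum>I\<in>{p*k..<p*k+k}. g I) = (\<Sum>i<k. g (p*k+i))"
    using sum.shift_bounds_nat_ivl[of g 0 "p*k" k] by (simp add: lessThan_atLeast0 add.commute)
  finally show ?case using Suc by simp
qed

lemma opb_sq:
  assumes "\<And>\<eta>. vn m (mv n a \<eta>) \<le> c * vn n \<eta>" "0 \<le> c"
  shows "ns m (mv n a \<eta>) \<le> c^2 * ns n \<eta>"
proof -
  have "sqrt (ns m (mv n a \<eta>)) \<le> c * sqrt (ns n \<eta>)" using assms(1) by (simp add: vn_ns)
  then have "(sqrt (ns m (mv n a \<eta>)))^2 \<le> (c * sqrt (ns n \<eta>))^2"
    by (intro power_mono) (auto simp: ns_nonneg)
  then show ?thesis using ns_nonneg by (simp add: power_mult_distrib)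
qed

lemma sq_opb:
  assumes "\<And>\<eta>. ns m (mv n a \<eta>) \<le> c^2 * ns n \<eta>" "0 \<le> c"
  shows "vn m (mv n a \<eta>) \<le> c * vn n \<eta>"
proof -
  have "sqrt (ns m (mv n a \<eta>)) \<le> sqrt (c^2 * ns n \<eta>)" using assms(1) by simp
  then show ?thesis using assms(2) by (simp add: vn_ns real_sqrt_mult)
qed

lemma tensor_bound:
  fixes X Y :: "nat \<Rightarrow> nat \<Rightarrow> complex"
  assumes X: "\<And>\<eta>. ns p (mv p X \<eta>) \<le> cx^2 * ns p \<eta>"
    and Y: "\<And>\<eta>. ns k (mv k Y \<eta>) \<le> cy^2 * ns k \<eta>"
    and cx: "0 \<le> cx" and cy: "0 \<le> cy"
  shows "ns (p*k) (mv (p*k) (\<lambda>I J. X (I div k) (J div k) * Y (I mod k) (J mod k)) \<xi>)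
          \<le> (cx*cy)^2 * ns (p*k) \<xi>"
proof -
  define Xi where "Xi s j = \<xi> (s*k+j)" for s j
  define Z where "Z s i = mv k Y (Xi s) i" for s i
  have T: "mv (p*k) (\<lambda>I J. X (I div k) (J div k) * Y (I mod k) (J mod k)) \<xi> (r*k+i)
           = mv p X (\<lambda>s. Z s i) r" if "i < k" for r i
  proof -
    have "mv (p*k) (\<lambda>I J. X (I div k) (J div k) * Y (I mod k) (J mod k)) \<xi> (r*k+i)
        = (\<Sum>s<p. \<Sum>j<k. X r s * Y i j * \<xi> (s*k+j))"
      unfolding mv_def sum_blocks using that by (simp add: algebra_simps)
    also have "\<dots> = (\<Sum>s<p. X r s * Z s i)"
      unfolding Z_def mv_def Xi_def by (simp add: sum_distrib_left algebra_simps)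
    finally show ?thesis by (simp add: mv_def)
  qed
  have "ns (p*k) (mv (p*k) (\<lambda>I J. X (I div k) (J div k) * Y (I mod k) (J mod k)) \<xi>)
      = (\<Sum>r<p. \<Sum>i<k. (cmod (mv p X (\<lambda>s. Z s i) r))^2)"
    unfolding ns_def sum_blocks by (simp add: T)
  also have "\<dots> = (\<Sum>i<k. ns p (mv p X (\<lambda>s. Z s i)))"
    unfolding ns_def by (rule sum.swap)
  also have "\<dots> \<le> (\<Sum>i<k. cx^2 * ns p (\<lambda>s. Z s i))"
    by (rule sum_mono) (rule X)
  also have "\<dots> = cx^2 * (\<Sum>s<p. ns k (mv k Y (Xi s)))"
    unfolding ns_def Z_def by (simp add: sum_distrib_left sum.swap[of _ "{..<k}"])
  also have "\<dots> \<le> cx^2 * (\<Sum>s<p. cy^2 * ns k (Xi s))"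
    by (intro mult_left_mono sum_mono Y) auto
  also have "\<dots> = (cx*cy)^2 * ns (p*k) \<xi>"
    unfolding ns_def sum_blocks Xi_def by (simp add: sum_distrib_left power_mult_distrib algebra_simps)
  finally show ?thesis .
qed

lemma compress_bound:
  fixes A :: "nat \<Rightarrow> nat \<Rightarrow> complex"
  assumes A: "\<And>\<xi>. ns (p*n) (mv (p*n) A \<xi>) \<le> ns (p*n) \<xi>" and u: "u < n"
  shows "ns p (mv p (\<lambda>r s. A (r*n+u) (s*n+u)) \<eta>) \<le> ns p \<eta>"
proof -
  define \<xi> where "\<xi> J = (if J mod n = u then \<eta> (J div n) else 0)" for J
  have xi: "\<xi> (s*n+i) = (if i = u then \<eta> s else 0)" if "i < n" for s i
    using that by (simp add: \<xi>_def)
  have "ns (p*n) \<xi> = (\<Sum>s<p. \<Sum>i<n. (cmod (if i = u then \<eta> s else 0))^2)"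
    unfolding ns_def sum_blocks by (simp add: xi)
  also have "\<dots> = ns p \<eta>"
    unfolding ns_def using u by (simp add: if_distrib[of cmod] if_distrib[of "\<lambda>x. x^2"] sum.delta cong: if_cong)
  finally have n1: "ns (p*n) \<xi> = ns p \<eta>" .
  have m: "mv (p*n) A \<xi> (r*n+u) = mv p (\<lambda>r s. A (r*n+u) (s*n+u)) \<eta> r" for r
  proof -
    have "mv (p*n) A \<xi> (r*n+u) = (\<Sum>s<p. \<Sum>i<n. A (r*n+u) (s*n+i) * (if i = u then \<eta> s else 0))"
      unfolding mv_def sum_blocks by (simp add: xi)
    also have "\<dots> = (\<Sum>s<p. A (r*n+u) (s*n+u) * \<eta> s)"
      using u by (simp add: if_distrib[of "\<lambda>x. _ * x"] sum.delta cong: if_cong)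
    finally show ?thesis by (simp add: mv_def)
  qed
  have "ns p (mv p (\<lambda>r s. A (r*n+u) (s*n+u)) \<eta>) = (\<Sum>r<p. (cmod (mv (p*n) A \<xi> (r*n+u)))^2)"
    unfolding ns_def by (simp add: m)
  also have "\<dots> \<le> (\<Sum>r<p. \<Sum>i<n. (cmod (mv (p*n) A \<xi> (r*n+i)))^2)"
    by (intro sum_mono member_le_sum) (use u in auto)
  also have "\<dots> = ns (p*n) (mv (p*n) A \<xi>)" unfolding ns_def sum_blocks ..
  also have "\<dots> \<le> ns p \<eta>" using A[of \<xi>] n1 by simp
  finally show ?thesis .
qed

lemma vn_add: "vn m (\<lambda>i. f i + g i) \<le> vn m f + vn m g"
proof -
  have "vn m (\<lambda>i. f i + g i) \<le> L2_set (\<lambda>i. cmod (f i) + cmod (g i)) {..<m}"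
    unfolding vn_def by (rule L2_set_mono) (auto simp: norm_triangle_ineq)
  also have "\<dots> \<le> vn m f + vn m g" unfolding vn_def by (rule L2_set_triangle_ineq)
  finally show ?thesis .
qed

lemma vn_sum: "finite S \<Longrightarrow> vn m (\<lambda>i. \<Sum>u\<in>S. f u i) \<le> (\<Sum>u\<in>S. vn m (f u))"
proof (induction S rule: finite_induct)
  case empty then show ?case by simp
next
  case (insert x F)
  have "vn m (\<lambda>i. \<Sum>u\<in>insert x F. f u i) = vn m (\<lambda>i. f x i + (\<Sum>u\<in>F. f u i))"
    using insert by simp
  also have "\<dots> \<le> vn m (f x) + vn m (\<lambda>i. \<Sum>u\<in>F. f u i)" by (rule vn_add)
  also have "\<dots> \<le> vn m (f x) + (\<Sum>u\<in>F. vn m (f u))" using insert by simp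
  finally show ?case using insert by simp
qed

lemma tnorm_diag:
  fixes b :: "nat \<Rightarrow> nat \<Rightarrow> nat \<Rightarrow> complex"
  assumes b: "\<And>u \<eta>. u < d \<Longrightarrow> vn k (mv k (b u) \<eta>) \<le> c * vn k \<eta>"
    and c: "0 \<le> c" and lam: "real d * c \<le> lam" "0 < lam"
  shows "tnorm k (\<lambda>i j u v. if u = v \<and> u < d then b u i j / complex_of_real lam else 0) \<le> 1"
proof -
  define \<sigma> where "\<sigma> = (\<lambda>i j u v. if u = v \<and> u < d then b u i j / complex_of_real lam else 0)"
  have ne: "{cmat_norm (p * k) (p * k) (sigma_ampl k \<sigma> n A) | p n A.
                      cmat_norm (p * n) (p * n) A \<le> 1} \<noteq> {}"
  proof -
    have "cmat_norm (0 * 0) (0 * 0) (\<lambda>_ _. 0) \<le> 1" by (rule cmat_least) (simp add: vn_def L2_set_def)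
    then show ?thesis by blast
  qed
  have main: "cmat_norm (p * k) (p * k) (sigma_ampl k \<sigma> n A) \<le> 1"
    if A1: "cmat_norm (p * n) (p * n) A \<le> 1" for p n A
  proof (rule cmat_least)
    fix \<xi> :: "nat \<Rightarrow> complex" assume xi: "vn (p*k) \<xi> \<le> 1"
    have Ab: "ns (p*n) (mv (p*n) A \<eta>) \<le> ns (p*n) \<eta>" for \<eta>
    proof -
      have "vn (p*n) (mv (p*n) A \<eta>) \<le> 1 * vn (p*n) \<eta>" for \<eta>
        using cmat_hom[of "p*n" "p*n" A \<eta>] A1 vn_nonneg[of "p*n" \<eta>]
        by (metis mult_right_mono order_trans)
      from opb_sq[OF this] show ?thesis by simp
    qed
    define S where "S = {..<n} \<inter> {..<d}"
    define T where "T u = (\<lambda>I J. (\<lambda>r s. A (r*n+u) (s*n+u)) (I div k) (J div k) * b u (I mod k) (J mod k))" for u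
    have M: "mv (p*k) (sigma_ampl k \<sigma> n A) \<xi> = (\<lambda>I. \<Sum>u\<in>S. complex_of_real (1/lam) * mv (p*k) (T u) \<xi> I)"
    proof
      fix I
      have "sigma_ampl k \<sigma> n A I J = (\<Sum>u\<in>S. complex_of_real (1/lam) * T u I J)" for J
      proof -
        have "sigma_ampl k \<sigma> n A I J = (\<Sum>u<n. if u < d then b u (I mod k) (J mod k) / complex_of_real lam
                 * A ((I div k) * n + u) ((J div k) * n + u) else 0)"
          unfolding sigma_ampl_def \<sigma>_def
          by (intro sum.cong refl) (simp add: if_distrib[of "\<lambda>x. x * _"] sum.delta cong: if_cong)
        also have "\<dots> = (\<Sum>u<n. if u \<in> {..<d} then complex_of_real (1/lam) * T u I J else 0)"
          unfolding T_def by (intro sum.cong refl) (auto simp: field_simps)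
        also have "\<dots> = (\<Sum>u\<in>S. complex_of_real (1/lam) * T u I J)"
          unfolding S_def sum.inter_restrict[OF finite_lessThan] by (intro sum.cong refl)
        finally show ?thesis .
      qed
      then show "mv (p*k) (sigma_ampl k \<sigma> n A) \<xi> I = (\<Sum>u\<in>S. complex_of_real (1/lam) * mv (p*k) (T u) \<xi> I)"
        unfolding mv_def by (simp add: sum_distrib_left sum_distrib_right sum.swap[of _ S] algebra_simps)
    qed
    have Tb: "vn (p*k) (mv (p*k) (T u) \<xi>) \<le> c * vn (p*k) \<xi>" if "u \<in> S" for u
    proof -
      have un: "u < n" "u < d" using that S_def by auto
      have X: "ns p (mv p (\<lambda>r s. A (r*n+u) (s*n+u)) \<eta>) \<le> 1^2 * ns p \<eta>" for \<eta>
        using compress_bound[OF Ab un(1)] by simp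
      have Y: "ns k (mv k (b u) \<eta>) \<le> c^2 * ns k \<eta>" for \<eta>
        by (rule opb_sq[OF b[OF un(2)] c])
      have "ns (p*k) (mv (p*k) (T u) \<eta>) \<le> (1*c)^2 * ns (p*k) \<eta>" for \<eta>
        unfolding T_def by (rule tensor_bound[OF X Y]) (use c in auto)
      then show ?thesis using sq_opb[of "p*k" "p*k" "T u" "1*c"] c by simp
    qed
    have "vn (p*k) (mv (p*k) (sigma_ampl k \<sigma> n A) \<xi>) \<le> (\<Sum>u\<in>S. vn (p*k) (\<lambda>I. complex_of_real (1/lam) * mv (p*k) (T u) \<xi> I))"
      unfolding M by (rule vn_sum) (simp add: S_def)
    also have "\<dots> = (\<Sum>u\<in>S. (1/lam) * vn (p*k) (mv (p*k) (T u) \<xi>))"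
      using lam by (intro sum.cong refl, subst vn_scale) (simp add: norm_divide)
    also have "\<dots> \<le> (\<Sum>u\<in>S. (1/lam) * c)"
    proof (rule sum_mono)
      fix u assume "u \<in> S"
      have "vn (p*k) (mv (p*k) (T u) \<xi>) \<le> c" using Tb[OF \<open>u \<in> S\<close>] xi c
        by (metis mult_left_mono mult.right_neutral order_trans)
      then show "(1/lam) * vn (p*k) (mv (p*k) (T u) \<xi>) \<le> (1/lam) * c" using lam by (simp add: divide_right_mono)
    qed
    also have "\<dots> = real (card S) * c / lam" by simp
    also have "\<dots> \<le> real d * c / lam"
    proof -
      have "card S \<le> d" unfolding S_def by (metis card_lessThan card_mono finite_lessThan inf_le2)
      then show ?thesis using c lam by (intro divide_right_mono mult_right_mono) auto
    qed
    also have "\<dots> \<le> 1" using lam by simp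
    finally show "vn (p*k) (mv (p*k) (sigma_ampl k \<sigma> n A) \<xi>) \<le> 1" .
  qed
  show ?thesis unfolding \<sigma>_def[symmetric] tnorm_def
    by (rule cSup_least[OF ne]) (use main in auto)
qed



lemma subseq_fin:
  fixes c :: "nat \<Rightarrow> 'b \<Rightarrow> complex"
  assumes "finite F" "\<And>j b. b \<in> F \<Longrightarrow> cmod (c j b) \<le> 1"
  shows "\<exists>r L. strict_mono r \<and> (\<forall>b\<in>F. (\<lambda>j. c (r j) b) \<longlonglongrightarrow> L b)"
  using assms
proof (induction F rule: finite_induct)
  case empty
  show ?case by (rule exI[of _ id]) (auto simp: strict_mono_def)
next
  case (insert x F)
  then obtain r L where r: "strict_mono r" "\<forall>b\<in>F. (\<lambda>j. c (r j) b) \<longlonglongrightarrow> L b" by auto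
  have "bounded (range (\<lambda>j. c (r j) x))"
    using insert.prems by (intro boundedI[where B=1]) auto
  then obtain l r2 where r2: "strict_mono r2" "((\<lambda>j. c (r j) x) \<circ> r2) \<longlonglongrightarrow> l"
    using bounded_imp_convergent_subsequence by blast
  have "strict_mono (r \<circ> r2)" using r(1) r2(1) by (rule strict_mono_o)
  moreover have "\<forall>b\<in>insert x F. (\<lambda>j. c ((r \<circ> r2) j) b) \<longlonglongrightarrow> (L(x := l)) b"
  proof
    fix b assume "b \<in> insert x F"
    then show "(\<lambda>j. c ((r \<circ> r2) j) b) \<longlonglongrightarrow> (L(x := l)) b"
    proof
      assume "b = x" then show ?thesis using r2(2) by (simp add: o_def)
    next
      assume "b \<in> F"
      then have "(\<lambda>j. c (r j) b) \<longlonglongrightarrow> L b" using r by auto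
      from LIMSEQ_subseq_LIMSEQ[OF this r2(1)] show ?thesis
        using \<open>b \<in> F\<close> insert.hyps by (auto simp: o_def)
    qed
  qed
  ultimately show ?case by blast
qed



locale osp =
  fixes smul :: "complex \<Rightarrow> 'v::ab_group_add \<Rightarrow> 'v"
    and nrm :: "nat \<Rightarrow> (nat \<Rightarrow> nat \<Rightarrow> 'v) \<Rightarrow> real"
  assumes os: "operator_space smul nrm"
begin

lemma vs: "vector_space smul" using os unfolding operator_space_def by auto

sublocale vs: vector_space smul by (rule vs)

lemma pos: "x \<in> mat_set k \<Longrightarrow> 0 \<le> nrm k x"
  and defin: "x \<in> mat_set k \<Longrightarrow> nrm k x = 0 \<longleftrightarrow> x = (\<lambda>i j. 0)"
  and tri: "x \<in> mat_set k \<Longrightarrow> y \<in> mat_set k \<Longrightarrow> nrm k (\<lambda>i j. x i j + y i j) \<le> nrm k x + nrm k y"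
  and hom: "x \<in> mat_set k \<Longrightarrow> nrm k (\<lambda>i j. smul c (x i j)) = cmod c * nrm k x"
  and ruan: "x \<in> mat_set n \<Longrightarrow> nrm m (mmul smul m n \<alpha> x \<beta>) \<le> cmat_norm m n \<alpha> * nrm n x * cmat_norm n m \<beta>"
  using os unfolding operator_space_def by auto

lemma zero_mat: "(\<lambda>i j. 0) \<in> mat_set k" by (simp add: mat_set_def)

lemma nrm_zero: "nrm k (\<lambda>i j. 0) = 0" using defin[OF zero_mat] by simp

definition e :: "'v \<Rightarrow> nat \<Rightarrow> nat \<Rightarrow> 'v" where
  "e v = (\<lambda>i j. if i < 1 \<and> j < 1 then v else 0)"

definition N :: "'v \<Rightarrow> real" where "N v = nrm 1 (e v)"

lemma e_mat: "e v \<in> mat_set 1" by (simp add: mat_set_def e_def)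

lemma N_nonneg: "0 \<le> N v" unfolding N_def by (rule pos[OF e_mat])

lemma N_tri: "N (v + w) \<le> N v + N w"
proof -
  have "e (v + w) = (\<lambda>i j. e v i j + e w i j)" by (auto simp: e_def fun_eq_iff)
  then show ?thesis unfolding N_def using tri[OF e_mat e_mat] by simp
qed

lemma N_hom: "N (smul c v) = cmod c * N v"
proof -
  have "e (smul c v) = (\<lambda>i j. smul c (e v i j))" by (auto simp: e_def fun_eq_iff)
  then show ?thesis unfolding N_def using hom[OF e_mat] by simp
qed

lemma N_zero: "N v = 0 \<Longrightarrow> v = 0"
proof -
  assume "N v = 0"
  then have "e v = (\<lambda>i j. 0)" unfolding N_def using defin[OF e_mat] by simp
  then have "e v 0 0 = 0" by simp
  then show "v = 0" by (simp add: e_def)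
qed

lemma N_0: "N 0 = 0"
proof -
  have "e 0 = (\<lambda>i j. 0)" by (auto simp: e_def fun_eq_iff)
  then show ?thesis by (simp add: N_def nrm_zero)
qed

lemma N_sum: "N (\<Sum>b\<in>S. f b) \<le> (\<Sum>b\<in>S. N (f b))"
proof (induction S rule: infinite_finite_induct)
  case (infinite A) then show ?case by (simp add: N_0)
next
  case empty then show ?case by (simp add: N_0)
next
  case (insert x F)
  then show ?case using N_tri[of "f x" "sum f F"] by simp
qed

end

locale fosp = osp +
  assumes fd: "findim smul"
begin

lemma ex_basis: "\<exists>B. finite B \<and> vs.independent B \<and> vs.span B = UNIV"
proof -
  obtain B0 where B0: "finite B0" "vs.span B0 = UNIV" using fd unfolding findim_def by auto
  obtain B where B: "B \<subseteq> B0" "vs.independent B" "B0 \<subseteq> vs.span B"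
    by (rule vs.maximal_independent_subset)
  have "vs.span B0 \<subseteq> vs.span B" using B(3) by (metis vs.span_mono vs.span_span)
  then have "vs.span B = UNIV" using B0(2) by auto
  moreover have "finite B" using B(1) B0(1) by (rule finite_subset)
  ultimately show ?thesis using B(2) by blast
qed

definition Bas where "Bas = (SOME B. finite B \<and> vs.independent B \<and> vs.span B = UNIV)"

lemma Bas: "finite Bas" "vs.independent Bas" "vs.span Bas = UNIV"
  using someI_ex[OF ex_basis] unfolding Bas_def[symmetric] by auto

definition rep where "rep v = vs.representation Bas v"

lemma rep_sum: "(\<Sum>b\<in>Bas. smul (rep v b) b) = v"
  unfolding rep_def by (rule vs.sum_representation_eq) (use Bas in auto)

lemma rep_add: "rep (u + v) b = rep u b + rep v b"
  unfolding rep_def using vs.representation_add[OF Bas(2)] Bas(3) by auto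

lemma rep_scale: "rep (smul c v) b = c * rep v b"
  unfolding rep_def using vs.representation_scale[OF Bas(2)] Bas(3) by auto

lemma rep_sum': "rep (\<Sum>i\<in>I. f i) b = (\<Sum>i\<in>I. rep (f i) b)"
  unfolding rep_def by (subst vs.representation_sum[OF Bas(2)]) (auto simp: Bas(3))

lemma lower_aux: "\<exists>m>0. \<forall>c. (\<Sum>b\<in>Bas. cmod (c b)) = 1 \<longrightarrow> m \<le> N (\<Sum>b\<in>Bas. smul (c b) b)"
proof (rule ccontr)
  assume "\<not> ?thesis"
  then have "\<forall>j. \<exists>c. (\<Sum>b\<in>Bas. cmod (c b)) = 1 \<and> N (\<Sum>b\<in>Bas. smul (c b) b) < inverse (real (Suc j))"
    by (metis not_le inverse_positive_iff_positive of_nat_0_less_iff zero_less_Suc)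
  then obtain c where c: "\<And>j. (\<Sum>b\<in>Bas. cmod (c j b)) = 1"
     "\<And>j. N (\<Sum>b\<in>Bas. smul (c j b) b) < inverse (real (Suc j))"
    by metis
  have cb: "cmod (c j b) \<le> 1" if "b \<in> Bas" for j b
    using member_le_sum[of b Bas "\<lambda>b. cmod (c j b)"] that c(1)[of j] Bas(1) by auto
  obtain r L where r: "strict_mono r" "\<forall>b\<in>Bas. (\<lambda>j. c (r j) b) \<longlonglongrightarrow> L b"
    using subseq_fin[of Bas c] Bas(1) cb by blast
  have "(\<lambda>j. \<Sum>b\<in>Bas. cmod (c (r j) b)) \<longlonglongrightarrow> (\<Sum>b\<in>Bas. cmod (L b))"
    by (intro tendsto_intros) (use r in auto)
  then have L1: "(\<Sum>b\<in>Bas. cmod (L b)) = 1" using c(1) by (simp add: LIMSEQ_const_iff)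
  define g where "g j = inverse (real (Suc j)) + (\<Sum>b\<in>Bas. cmod (L b - c (r j) b) * N b)" for j
  have g0: "g \<longlonglongrightarrow> 0"
  proof -
    have "g \<longlonglongrightarrow> 0 + (\<Sum>b\<in>Bas. cmod (L b - L b) * N b)"
      unfolding g_def by (intro tendsto_intros LIMSEQ_inverse_real_of_nat) (use r in auto)
    then show ?thesis by simp
  qed
  have le: "N (\<Sum>b\<in>Bas. smul (L b) b) \<le> g j" for j
  proof -
    have eq: "(\<Sum>b\<in>Bas. smul (L b) b) = (\<Sum>b\<in>Bas. smul (c (r j) b) b) + (\<Sum>b\<in>Bas. smul (L b - c (r j) b) b)"
      by (simp add: sum.distrib[symmetric] vs.scale_left_diff_distrib)
    have "N (\<Sum>b\<in>Bas. smul (L b) b) \<le> N (\<Sum>b\<in>Bas. smul (c (r j) b) b) + N (\<Sum>b\<in>Bas. smul (L b - c (r j) b) b)"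
      unfolding eq by (rule N_tri)
    also have "N (\<Sum>b\<in>Bas. smul (L b - c (r j) b) b) \<le> (\<Sum>b\<in>Bas. cmod (L b - c (r j) b) * N b)"
      using N_sum[of "\<lambda>b. smul (L b - c (r j) b) b" Bas] by (simp add: N_hom)
    also have "N (\<Sum>b\<in>Bas. smul (c (r j) b) b) \<le> inverse (real (Suc j))"
    proof -
      have "j \<le> r j" using seq_suble[OF r(1)] by simp
      then have "inverse (real (Suc (r j))) \<le> inverse (real (Suc j))"
        by (simp add: le_imp_inverse_le)
      then show ?thesis using c(2)[of "r j"] by linarith
    qed
    finally show ?thesis unfolding g_def by linarith
  qed
  have "N (\<Sum>b\<in>Bas. smul (L b) b) \<le> 0"
    using LIMSEQ_le_const[OF g0] le by blast
  then have "(\<Sum>b\<in>Bas. smul (L b) b) = 0" using N_nonneg by (metis N_zero order_antisym)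
  then have "\<forall>b\<in>Bas. L b = 0"
    using Bas(2) vs.dependent_finite[OF Bas(1)] by blast
  then show False using L1 by simp
qed

lemma lower: "\<exists>C>0. \<forall>v. \<forall>b\<in>Bas. cmod (rep v b) \<le> C * N v"
proof -
  obtain m where m: "m > 0" "\<And>c. (\<Sum>b\<in>Bas. cmod (c b)) = 1 \<Longrightarrow> m \<le> N (\<Sum>b\<in>Bas. smul (c b) b)"
    using lower_aux by blast
  have "cmod (rep v b) \<le> (1/m) * N v" if b: "b \<in> Bas" for v b
  proof -
    define s where "s = (\<Sum>b\<in>Bas. cmod (rep v b))"
    have sb: "cmod (rep v b) \<le> s" unfolding s_def using b Bas(1) by (intro member_le_sum) auto
    show ?thesis
    proof (cases "s = 0")
      case True
      then show ?thesis using sb N_nonneg[of v] m by (simp add: )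
    next
      case False
      then have sp: "s > 0" unfolding s_def by (metis less_eq_real_def norm_ge_zero sum_nonneg)
      define c where "c b = rep v b / complex_of_real s" for b
      have "(\<Sum>b\<in>Bas. cmod (c b)) = 1"
        unfolding c_def using sp by (simp add: norm_divide sum_divide_distrib[symmetric] s_def[symmetric])
      then have "m \<le> N (\<Sum>b\<in>Bas. smul (c b) b)" by (rule m(2))
      also have "(\<Sum>b\<in>Bas. smul (c b) b) = smul (1 / complex_of_real s) v"
      proof -
        have "(\<Sum>b\<in>Bas. smul (c b) b) = (\<Sum>b\<in>Bas. smul (1 / complex_of_real s) (smul (rep v b) b))"
          by (simp add: c_def vs.scale_scale)
        also have "\<dots> = smul (1 / complex_of_real s) (\<Sum>b\<in>Bas. smul (rep v b) b)"
          by (rule vs.scale_sum_right[symmetric])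
        finally show ?thesis by (simp only: rep_sum)
      qed
      also have "N \<dots> = N v / s" using sp by (simp add: N_hom norm_divide)
      finally have "m * s \<le> N v" using sp by (simp add: field_simps)
      then show ?thesis using sb m(1) sp by (simp add: field_simps) (smt (verit) mult_left_mono)
    qed
  qed
  then show ?thesis using m(1) by (intro exI[of _ "1/m"]) auto
qed

end



lemma vn_1: "vn (Suc 0) f = cmod (f 0)" by (simp add: vn_def L2_set_def lessThan_Suc)

context fosp begin

lemma coef_bound:
  assumes y: "y \<in> mat_set k" and b: "b \<in> Bas"
    and C: "\<And>v b. b \<in> Bas \<Longrightarrow> cmod (rep v b) \<le> C * N v" and Cp: "0 < C"
  shows "vn k (mv k (\<lambda>i j. rep (y i j) b) \<eta>) \<le> C * nrm k y * vn k \<eta>"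
proof -
  define w where "w = mv k (\<lambda>i j. rep (y i j) b) \<eta>"
  define z where "z = (\<Sum>p<k. \<Sum>q<k. smul (cnj (w p) * \<eta> q) (y p q))"
  define \<alpha> where "\<alpha> = (\<lambda>(i::nat) p. cnj (w p))"
  define \<beta> where "\<beta> = (\<lambda>q (j::nat). \<eta> q)"
  have "rep z b = (\<Sum>p<k. \<Sum>q<k. cnj (w p) * \<eta> q * rep (y p q) b)"
    unfolding z_def by (simp add: rep_sum' rep_scale)
  also have "\<dots> = (\<Sum>p<k. cnj (w p) * w p)"
  proof (rule sum.cong[OF refl])
    fix p
    have wp: "w p = (\<Sum>q<k. rep (y p q) b * \<eta> q)" by (simp add: w_def mv_def)
    show "(\<Sum>q<k. cnj (w p) * \<eta> q * rep (y p q) b) = cnj (w p) * w p"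
      by (subst (2) wp) (simp add: sum_distrib_left mult_ac)
  qed
  also have "\<dots> = complex_of_real (ns k w)"
    unfolding ns_def of_real_sum by (intro sum.cong refl) (simp add: complex_norm_square mult.commute del: of_real_power)
  finally have rz: "rep z b = complex_of_real (ns k w)" .
  have "ns k w = cmod (rep z b)" using rz ns_nonneg[of k w] by simp
  also have "\<dots> \<le> C * N z" by (rule C[OF b])
  finally have nsw: "ns k w \<le> C * N z" .
  have ez: "e z = mmul smul 1 k \<alpha> y \<beta>"
    unfolding e_def mmul_def z_def \<alpha>_def \<beta>_def by (auto simp: fun_eq_iff)
  have ca: "cmat_norm 1 k \<alpha> \<le> vn k w"
  proof (rule cmat_least)
    fix \<xi> :: "nat \<Rightarrow> complex" assume xi: "vn k \<xi> \<le> 1"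
    have "vn 1 (mv k \<alpha> \<xi>) = cmod (\<Sum>j<k. cnj (w j) * \<xi> j)"
      using vn_1 by (simp add: mv_def \<alpha>_def)
    also have "\<dots> \<le> (\<Sum>j<k. \<bar>cmod (w j)\<bar> * \<bar>cmod (\<xi> j)\<bar>)"
      by (rule order_trans[OF norm_sum]) (simp add: norm_mult)
    also have "\<dots> \<le> vn k w * vn k \<xi>" unfolding vn_def by (rule L2_set_mult_ineq)
    also have "\<dots> \<le> vn k w" using xi vn_nonneg[of k w] by (simp add: mult_left_le)
    finally show "vn 1 (mv k \<alpha> \<xi>) \<le> vn k w" .
  qed
  have cb: "cmat_norm k 1 \<beta> \<le> vn k \<eta>"
  proof (rule cmat_least)
    fix \<xi> :: "nat \<Rightarrow> complex" assume xi: "vn 1 \<xi> \<le> 1"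
    then have x0: "cmod (\<xi> 0) \<le> 1" using vn_1 by simp
    have "mv 1 \<beta> \<xi> = (\<lambda>i. \<xi> 0 * \<eta> i)" by (simp add: mv_def \<beta>_def mult.commute)
    then have "vn k (mv 1 \<beta> \<xi>) = cmod (\<xi> 0) * vn k \<eta>" by (simp add: vn_scale)
    also have "\<dots> \<le> vn k \<eta>" using x0 vn_nonneg[of k \<eta>] by (simp add: mult_left_le_one_le)
    finally show "vn k (mv 1 \<beta> \<xi>) \<le> vn k \<eta>" .
  qed
  have "N z = nrm 1 (mmul smul 1 k \<alpha> y \<beta>)" unfolding N_def ez ..
  also have "\<dots> \<le> cmat_norm 1 k \<alpha> * nrm k y * cmat_norm k 1 \<beta>" by (rule ruan[OF y])
  also have "\<dots> \<le> vn k w * nrm k y * vn k \<eta>"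
    using ca cb pos[OF y] cmat_nonneg[of 1 k \<alpha>] cmat_nonneg[of k 1 \<beta>] vn_nonneg[of k w]
    by (intro mult_mono) auto
  finally have Nz: "N z \<le> vn k w * nrm k y * vn k \<eta>" .
  have sq: "(vn k w)^2 \<le> C * (vn k w * nrm k y * vn k \<eta>)"
    using nsw Nz Cp by (simp add: vn_ns ns_nonneg) (smt (verit) mult_left_mono)
  show ?thesis
  proof (cases "vn k w = 0")
    case True
    then show ?thesis using Cp pos[OF y] vn_nonneg[of k \<eta>] unfolding w_def by simp
  next
    case False
    then have "vn k w > 0" using vn_nonneg[of k w] by simp
    then have "vn k w * vn k w \<le> vn k w * (C * nrm k y * vn k \<eta>)"
      using sq by (simp add: power2_eq_square algebra_simps)
    then show ?thesis using \<open>vn k w > 0\<close> unfolding w_def by simp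
  qed
qed


lemma ball_closed: "mclosure nrm k (matrix_unit_ball nrm k) = matrix_unit_ball nrm k"
proof
  show "mclosure nrm k (matrix_unit_ball nrm k) \<subseteq> matrix_unit_ball nrm k"
  proof
    fix y assume "y \<in> mclosure nrm k (matrix_unit_ball nrm k)"
    then have y: "y \<in> mat_set k" and ap: "\<And>\<epsilon>. \<epsilon> > 0 \<Longrightarrow> \<exists>s\<in>matrix_unit_ball nrm k. nrm k (\<lambda>i j. y i j - s i j) < \<epsilon>"
      unfolding mclosure_def by auto
    have "nrm k y \<le> 1 + \<epsilon>" if eps: "\<epsilon> > 0" for \<epsilon>
    proof -
      obtain s where s: "s \<in> matrix_unit_ball nrm k" "nrm k (\<lambda>i j. y i j - s i j) < \<epsilon>" using ap[OF eps] by auto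
      have sm: "s \<in> mat_set k" "nrm k s \<le> 1" using s(1) by (auto simp: matrix_unit_ball_def)
      have dm: "(\<lambda>i j. y i j - s i j) \<in> mat_set k" using y sm(1) by (auto simp: mat_set_def)
      have "y = (\<lambda>i j. (\<lambda>i j. y i j - s i j) i j + s i j)" by simp
      then have "nrm k y \<le> nrm k (\<lambda>i j. y i j - s i j) + nrm k s"
        using tri[OF dm sm(1)] by simp
      then show ?thesis using s(2) sm(2) by linarith
    qed
    then have "nrm k y \<le> 1" by (meson field_le_epsilon)
    then show "y \<in> matrix_unit_ball nrm k" using y by (simp add: matrix_unit_ball_def)
  qed
next
  show "matrix_unit_ball nrm k \<subseteq> mclosure nrm k (matrix_unit_ball nrm k)"
  proof
    fix y assume y: "y \<in> matrix_unit_ball nrm k"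
    then have "nrm k (\<lambda>i j. y i j - y i j) = 0" by (simp add: nrm_zero)
    then show "y \<in> mclosure nrm k (matrix_unit_ball nrm k)"
      using y by (auto simp: mclosure_def matrix_unit_ball_def)
  qed
qed

theorem main: "op_compact smul nrm (matrix_unit_ball nrm)"
proof -
  obtain C where Cp: "C > 0" and C: "\<And>v b. b \<in> Bas \<Longrightarrow> cmod (rep v b) \<le> C * N v"
    using lower by blast
  define d where "d = card Bas"
  obtain f where f: "bij_betw f {..<d} Bas"
    using ex_bij_betw_nat_finite[OF Bas(1)] by (auto simp: d_def lessThan_atLeast0)
  define lam where "lam = real d * C + 1"
  have lam: "real d * C \<le> lam" "0 < lam" using Cp by (auto simp: lam_def intro: add_nonneg_pos)
  define x where "x u v = (if u = v \<and> u < d then smul (complex_of_real lam) (f u) else 0)" for u v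
  have xz: "x u v = 0" if "d \<le> u \<or> d \<le> v" for u v using that by (auto simp: x_def)
  have xK: "x \<in> KV nrm"
    unfolding KV_def
  proof (clarify)
    fix \<epsilon> :: real assume "0 < \<epsilon>"
    have "nrm (max m n) (\<lambda>i j. trunc m x i j - trunc n x i j) < \<epsilon>" if "d \<le> m" "d \<le> n" for m n
    proof -
      have "(\<lambda>i j. trunc m x i j - trunc n x i j) = (\<lambda>i j. 0)"
        using that xz by (auto simp: trunc_def fun_eq_iff)
      then show ?thesis using \<open>0 < \<epsilon>\<close> by (simp add: nrm_zero)
    qed
    then show "\<exists>N. \<forall>m n. N \<le> m \<longrightarrow> N \<le> n \<longrightarrow> nrm (max m n) (\<lambda>i j. trunc m x i j - trunc n x i j) < \<epsilon>"
      by blast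
  qed
  have cover: "y \<in> mclosure nrm k {slice smul k N \<sigma> x | N \<sigma>. fin_supp N \<sigma> \<and> tnorm k \<sigma> \<le> 1}"
    if y: "y \<in> matrix_unit_ball nrm k" for k y
  proof -
    have ym: "y \<in> mat_set k" and y1: "nrm k y \<le> 1" using y by (auto simp: matrix_unit_ball_def)
    define b where "b u i j = rep (y i j) (f u)" for u i j
    define \<sigma> where "\<sigma> = (\<lambda>i j u v. if u = v \<and> u < d then b u i j / complex_of_real lam else 0)"
    have bb: "vn k (mv k (b u) \<eta>) \<le> C * vn k \<eta>" if "u < d" for u \<eta>
    proof -
      have "f u \<in> Bas" using f that by (auto simp: bij_betw_def)
      then have "vn k (mv k (b u) \<eta>) \<le> C * nrm k y * vn k \<eta>"
        unfolding b_def by (rule coef_bound[OF ym _ C Cp])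
      also have "\<dots> \<le> C * vn k \<eta>"
      proof -
        have "nrm k y * vn k \<eta> \<le> vn k \<eta>"
          by (rule mult_left_le_one_le[OF vn_nonneg pos[OF ym] y1])
        then show ?thesis using Cp by (simp add: mult.assoc)
      qed
      finally show ?thesis .
    qed
    have tn: "tnorm k \<sigma> \<le> 1" unfolding \<sigma>_def
      by (rule tnorm_diag[OF bb _ lam]) (use Cp in auto)
    have fs: "fin_supp d \<sigma>" by (auto simp: fin_supp_def \<sigma>_def)
    have sl: "slice smul k d \<sigma> x = y"
    proof (intro ext)
      fix i j
      show "slice smul k d \<sigma> x i j = y i j"
      proof (cases "i < k \<and> j < k")
        case False
        then show ?thesis using ym by (auto simp: slice_def mat_set_def)
      next
        case True
        have inner: "(\<Sum>v<d. smul (\<sigma> i j u v) (x u v)) = smul (b u i j) (f u)" if "u < d" for u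
        proof -
          have "(\<Sum>v<d. smul (\<sigma> i j u v) (x u v)) = (\<Sum>v<d. if v = u then smul (\<sigma> i j u u) (x u u) else 0)"
            by (intro sum.cong refl) (auto simp: \<sigma>_def)
          also have "\<dots> = smul (\<sigma> i j u u) (x u u)" using that by simp
          also have "\<dots> = smul (b u i j / complex_of_real lam * complex_of_real lam) (f u)"
            using that by (simp add: \<sigma>_def x_def vs.scale_scale)
          also have "\<dots> = smul (b u i j) (f u)" using lam by simp
          finally show ?thesis .
        qed
        have "slice smul k d \<sigma> x i j = (\<Sum>u<d. smul (b u i j) (f u))"
          using True inner by (simp add: slice_def)
        also have "\<dots> = (\<Sum>c\<in>Bas. smul (rep (y i j) c) c)"
          unfolding b_def by (rule sum.reindex_bij_betw[OF f, of "\<lambda>c. smul (rep (y i j) c) c"])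
        also have "\<dots> = y i j" by (rule rep_sum)
        finally show ?thesis .
      qed
    qed
    have "nrm k (\<lambda>i j. y i j - slice smul k d \<sigma> x i j) = 0" unfolding sl by (simp add: nrm_zero)
    then show ?thesis using ym fs tn unfolding mclosure_def by fastforce
  qed
  show ?thesis unfolding op_compact_def
  proof (rule conjI)
    show "\<forall>k. matrix_unit_ball nrm k \<subseteq> mat_set k \<and> mclosure nrm k (matrix_unit_ball nrm k) = matrix_unit_ball nrm k"
      using ball_closed by (auto simp: matrix_unit_ball_def)
  next
    show "\<exists>x\<in>KV nrm. \<forall>k. matrix_unit_ball nrm k \<subseteq> mclosure nrm k
        {slice smul k N \<sigma> x | N \<sigma>. fin_supp N \<sigma> \<and> tnorm k \<sigma> \<le> 1}"
      using xK cover by blast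
  qed
qed

end


theorem corollary6p2:
  fixes smul :: "complex \<Rightarrow> 'v::ab_group_add \<Rightarrow> 'v"
    and nrm :: "nat \<Rightarrow> (nat \<Rightarrow> nat \<Rightarrow> 'v) \<Rightarrow> real"
  assumes "operator_space smul nrm"
    and "findim smul"
  shows "op_compact smul nrm (matrix_unit_ball nrm)"
proof -
  have "fosp smul nrm" using assms by (simp add: fosp_def fosp_axioms_def osp_def)
  then show ?thesis by (rule fosp.main)
qed

end
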